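(* For $n\ge 6$, let $W_n$ be the wheel graph on $n$ vertices, i.e. the join of a cycle $C_{n-1}$ with a single vertex $c$ adjacent to all vertices of the cycle. Then $\mathcal{R}(W_n)=\frac{(n-3)(n^2+8)}{2(n-2)(4n-13)}$.
   Context: All graphs are finite, simple and connected, with at least two vertices; $d(u,v)$ denotes the shortest-path distance. $V_p$ denotes the set of all unordered pairs $(u,v)$ of distinct vertices. A vertex $x$ resolves the pair $(u,v)$ if $d(x,u)\neq d(x,v)$. For $(u,v)\in V_p$, $R(u,v)$ is the set of all vertices resolving $(u,v)$ (it always contains $u$ and $v$). The resolving share of a vertex $w$ for $(u,v)$ is $r_w(u,v)=\frac{1}{|R(u,v)|}$ if $w$ resolves $u$ and $v$, and $r_w(u,v)=0$ otherwise. For a vertex $w$, $R(w)$ is the set of pairs in $V_p$ resolved by $w$. The average resolving share of $w$ is $ar_w(G)=\frac{1}{|R(w)|}\sum_{(u,v)\in R(w)} r_w(u,v)$, and the resolving topological index of $G$ is $\mathcal{R}(G)=\sum_{w\in V(G)} ar_w(G)$. *)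

theory Defs
  imports Complex_Main
begin

definition gdist :: "'a set \<Rightarrow> ('a \<Rightarrow> 'a \<Rightarrow> bool) \<Rightarrow> 'a \<Rightarrow> 'a \<Rightarrow> nat" where
  "gdist V E u v = (LEAST k. \<exists>xs. length xs = Suc k \<and> hd xs = u \<and> last xs = v
                      \<and> set xs \<subseteq> V \<and> successively E xs)"

definition vpairs :: "'a set \<Rightarrow> 'a set set" where
  "vpairs V = {{u, v} | u v. u \<in> V \<and> v \<in> V \<and> u \<noteq> v}"

definition resolves :: "'a set \<Rightarrow> ('a \<Rightarrow> 'a \<Rightarrow> bool) \<Rightarrow> 'a \<Rightarrow> 'a set \<Rightarrow> bool" where
  "resolves V E x P = (\<exists>u v. P = {u, v} \<and> gdist V E x u \<noteq> gdist V E x v)"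

definition resolving_verts :: "'a set \<Rightarrow> ('a \<Rightarrow> 'a \<Rightarrow> bool) \<Rightarrow> 'a set \<Rightarrow> 'a set" where
  "resolving_verts V E P = {x \<in> V. resolves V E x P}"

definition rshare :: "'a set \<Rightarrow> ('a \<Rightarrow> 'a \<Rightarrow> bool) \<Rightarrow> 'a \<Rightarrow> 'a set \<Rightarrow> real" where
  "rshare V E w P = (if resolves V E w P then 1 / real (card (resolving_verts V E P)) else 0)"

definition resolved_pairs :: "'a set \<Rightarrow> ('a \<Rightarrow> 'a \<Rightarrow> bool) \<Rightarrow> 'a \<Rightarrow> 'a set set" where
  "resolved_pairs V E w = {P \<in> vpairs V. resolves V E w P}"

definition avg_rshare :: "'a set \<Rightarrow> ('a \<Rightarrow> 'a \<Rightarrow> bool) \<Rightarrow> 'a \<Rightarrow> real" where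
  "avg_rshare V E w = (1 / real (card (resolved_pairs V E w))) *
      (\<Sum>P\<in>resolved_pairs V E w. rshare V E w P)"

definition resolving_index :: "'a set \<Rightarrow> ('a \<Rightarrow> 'a \<Rightarrow> bool) \<Rightarrow> real" where
  "resolving_index V E = (\<Sum>w\<in>V. avg_rshare V E w)"

text \<open>Wheel graph W_n on vertices {0..<n}: 0 is the hub, 1..n-1 form the cycle C_{n-1}
  (i adjacent to i mod (n-1) + 1).\<close>
definition wheel_V :: "nat \<Rightarrow> nat set" where
  "wheel_V n = {0..<n}"

definition wheel_E :: "nat \<Rightarrow> nat \<Rightarrow> nat \<Rightarrow> bool" where
  "wheel_E n i j = (i \<noteq> j \<and> i < n \<and> j < n \<and>
     ((i = 0 \<and> j \<ge> 1) \<or> (j = 0 \<and> i \<ge> 1) \<or>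
      (i \<ge> 1 \<and> j \<ge> 1 \<and> (j = i mod (n - 1) + 1 \<or> i = j mod (n - 1) + 1))))"

end

theory Submission imports Defs begin

lemma gdist_refl: "u \<in> V \<Longrightarrow> gdist V E u u = 0"
  unfolding gdist_def by (rule Least_eq_0) (rule exI[of _ "[u]"], auto)

lemma len1_hd_last: "length xs = Suc 0 \<Longrightarrow> hd xs = last xs"
  by (cases xs) auto

lemma gdist_1: assumes "u \<noteq> v" "u\<in>V" "v\<in>V" "E u v" shows "gdist V E u v = 1"
  unfolding gdist_def
proof (rule Least_equality)
  show "\<exists>xs. length xs = Suc 1 \<and> hd xs = u \<and> last xs = v \<and> set xs \<subseteq> V \<and> successively E xs"
    by (rule exI[of _ "[u,v]"]) (use assms in auto)
next
  fix k assume "\<exists>xs. length xs = Suc k \<and> hd xs = u \<and> last xs = v \<and> set xs \<subseteq> V \<and> successively E xs"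
  then obtain xs where xs: "length xs = Suc k" "hd xs = u" "last xs = v" by blast
  show "1 \<le> k"
  proof (rule ccontr)
    assume "\<not> 1 \<le> k" then have "k = 0" by simp
    with xs len1_hd_last[of xs] assms(1) show False by simp
  qed
qed

lemma gdist_2: assumes "u \<noteq> v" "u\<in>V" "v\<in>V" "c \<in> V" "\<not> E u v" "E u c" "E c v"
  shows "gdist V E u v = 2"
  unfolding gdist_def
proof (rule Least_equality)
  show "\<exists>xs. length xs = Suc 2 \<and> hd xs = u \<and> last xs = v \<and> set xs \<subseteq> V \<and> successively E xs"
    by (rule exI[of _ "[u,c,v]"]) (use assms in auto)
next
  fix k assume "\<exists>xs. length xs = Suc k \<and> hd xs = u \<and> last xs = v \<and> set xs \<subseteq> V \<and> successively E xs"
  then obtain xs where xs: "length xs = Suc k" "hd xs = u" "last xs = v" "successively E xs" by blast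
  show "2 \<le> k"
  proof (rule ccontr)
    assume "\<not> 2 \<le> k" then have "k = 0 \<or> k = 1" by auto
    then show False
    proof
      assume "k = 0"
      with xs len1_hd_last[of xs] assms(1) show False by simp
    next
      assume "k = 1"
      with xs(1) obtain a b where "xs = [a,b]"
        by (metis One_nat_def length_0_conv length_Suc_conv)
      with xs assms(5) show False by simp
    qed
  qed
qed

lemma resolves_pair: "resolves V E x {u,v} \<longleftrightarrow> gdist V E x u \<noteq> gdist V E x v"
  unfolding resolves_def by (auto simp: doubleton_eq_iff)

lemma L_count:
  fixes f :: "'a \<Rightarrow> nat"
  shows "card {P \<in> vpairs V. \<exists>u v. P = {u,v} \<and> f u \<noteq> f v}
       = card {(u,v). u \<in> V \<and> v \<in> V \<and> f u < f v}"
proof -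
  let ?S = "{(u,v). u \<in> V \<and> v \<in> V \<and> f u < f v}"
  let ?T = "{P \<in> vpairs V. \<exists>u v. P = {u,v} \<and> f u \<noteq> f v}"
  have "bij_betw (\<lambda>(u,v). {u,v}) ?S ?T"
  proof (rule bij_betw_imageI)
    show "inj_on (\<lambda>(u,v). {u,v}) ?S"
      by (auto simp: inj_on_def doubleton_eq_iff)
    show "(\<lambda>(u,v). {u,v}) ` ?S = ?T"
    proof
      show "(\<lambda>(u,v). {u,v}) ` ?S \<subseteq> ?T"
        apply (auto simp: vpairs_def)
        subgoal for a b by (rule exI[of _ a], rule exI[of _ b]) simp
        done
    next
      show "?T \<subseteq> (\<lambda>(u,v). {u,v}) ` ?S"
      proof
        fix P assume "P \<in> ?T"
        then obtain u v where P: "P = {u,v}" "f u \<noteq> f v" and "P \<in> vpairs V" by blast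
        then have uv: "u \<in> V" "v \<in> V" unfolding vpairs_def by auto
        show "P \<in> (\<lambda>(u,v). {u,v}) ` ?S"
        proof (cases "f u < f v")
          case True then show ?thesis using P uv by auto
        next
          case False then have "f v < f u" using P by auto
          then have "(v,u) \<in> ?S" using uv by auto
          moreover have "P = (\<lambda>(u,v). {u,v}) (v,u)" using P by auto
          ultimately show ?thesis by blast
        qed
      qed
    qed
  qed
  then show ?thesis by (simp add: bij_betw_same_card)
qed

definition sc :: "nat \<Rightarrow> nat \<Rightarrow> nat" where "sc n i = i mod (n - 1) + 1"
definition pc :: "nat \<Rightarrow> nat \<Rightarrow> nat" where "pc n i = (if i = 1 then n - 1 else i - 1)"

lemma wE_sym: "wheel_E n i j = wheel_E n j i" unfolding wheel_E_def by auto
lemma wE_irr: "\<not> wheel_E n i i" unfolding wheel_E_def by auto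
lemma wE_hub: "1 \<le> j \<Longrightarrow> j < n \<Longrightarrow> wheel_E n 0 j" unfolding wheel_E_def by auto

lemma wE_nbr:
  assumes n: "4 \<le> n" and i: "1 \<le> i" "i < n" and x: "x < n"
  shows "wheel_E n i x \<longleftrightarrow> (x = 0 \<or> x = sc n i \<or> x = pc n i)"
proof -
  have m1: "i mod (n-1) = (if i = n - 1 then 0 else i)" using i by auto
  have m2: "x mod (n-1) = (if x = n - 1 then 0 else x)" using x by auto
  show ?thesis unfolding wheel_E_def sc_def pc_def using n i x m1 m2
    by (cases "x = 0") (auto split: if_splits)
qed

lemma sc_pc:
  assumes n: "4 \<le> n" and i: "1 \<le> i" "i < n"
  shows "1 \<le> sc n i" "sc n i < n" "1 \<le> pc n i" "pc n i < n" "sc n i \<noteq> pc n i"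
    "sc n i \<noteq> i" "pc n i \<noteq> i"
proof -
  have m1: "i mod (n-1) = (if i = n - 1 then 0 else i)" using i by auto
  show "1 \<le> sc n i" "sc n i < n" "1 \<le> pc n i" "pc n i < n" "sc n i \<noteq> pc n i"
    "sc n i \<noteq> i" "pc n i \<noteq> i"
    unfolding sc_def pc_def using n i m1 by auto
qed

lemma gd:
  assumes "u < n" "v < n"
  shows "gdist (wheel_V n) (wheel_E n) u v = (if u = v then 0 else if wheel_E n u v then 1 else 2)"
proof -
  have V: "u \<in> wheel_V n" "v \<in> wheel_V n" "0 \<in> wheel_V n" using assms by (auto simp: wheel_V_def)
  show ?thesis
  proof (cases "u = v")
    case True then show ?thesis using V gdist_refl by simp
  next
    case uv: False
    show ?thesis
    proof (cases "wheel_E n u v")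
      case True then show ?thesis using uv V gdist_1 by simp
    next
      case False
      then have "u \<noteq> 0" "v \<noteq> 0" using uv assms unfolding wheel_E_def by auto
      then have "wheel_E n u 0" "wheel_E n 0 v" using assms unfolding wheel_E_def by auto
      then show ?thesis using uv False V gdist_2[where c=0] by simp
    qed
  qed
qed

lemma fin_vpairs: "finite V \<Longrightarrow> finite (vpairs V)"
  by (rule finite_subset[of _ "Pow V"]) (auto simp: vpairs_def)

lemma sum_RP: "finite V \<Longrightarrow> (\<Sum>P\<in>resolved_pairs V E w. rshare V E w P) = (\<Sum>P\<in>vpairs V. rshare V E w P)"
  by (rule sum.mono_neutral_left) (auto simp: fin_vpairs resolved_pairs_def rshare_def)

lemma RP_eq: "resolved_pairs V E w = {P \<in> vpairs V. \<exists>u v. P = {u,v} \<and> gdist V E w u \<noteq> gdist V E w v}"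
  unfolding resolved_pairs_def resolves_def by simp

lemma mem_wV: "x \<in> wheel_V n \<longleftrightarrow> x < n" by (simp add: wheel_V_def)

context
  fixes n :: nat
  assumes n4: "4 \<le> n"
begin

lemma dist_hub: "v < n \<Longrightarrow> gdist (wheel_V n) (wheel_E n) 0 v = (if v = 0 then 0 else 1)"
  using gd[of 0 n v] wE_hub[of v n] by auto

lemma dist_hub': "v < n \<Longrightarrow> gdist (wheel_V n) (wheel_E n) v 0 = (if v = 0 then 0 else 1)"
  using gd[of v n 0] wE_hub[of v n] wE_sym[of n v 0] by auto

lemma dist_cyc: "1 \<le> w \<Longrightarrow> w < n \<Longrightarrow> v < n \<Longrightarrow>
   gdist (wheel_V n) (wheel_E n) w v = (if v = w then 0 else if v \<in> {0, sc n w, pc n w} then 1 else 2)"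
  using gd[of w n v] wE_nbr[OF n4, of w v] by auto

lemma dist_cyc': "1 \<le> w \<Longrightarrow> w < n \<Longrightarrow> v < n \<Longrightarrow>
   gdist (wheel_V n) (wheel_E n) v w = (if v = w then 0 else if v \<in> {0, sc n w, pc n w} then 1 else 2)"
  using gd[of v n w] wE_nbr[OF n4, of w v] wE_sym[of n v w] by auto

lemma card_RP_hub: "card (resolved_pairs (wheel_V n) (wheel_E n) 0) = n - 1"
proof -
  have "{(u,v). u \<in> wheel_V n \<and> v \<in> wheel_V n \<and> gdist (wheel_V n) (wheel_E n) 0 u < gdist (wheel_V n) (wheel_E n) 0 v}
      = {0} \<times> ({0..<n} - {0})"
    using n4 by (auto simp: mem_wV dist_hub split: if_splits)
  moreover have "card ({0..<n} - {0::nat}) = n - 1" using n4 by simp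
  ultimately show ?thesis unfolding RP_eq L_count by simp
qed

lemma card_RP_cyc:
  assumes w: "1 \<le> w" "w < n"
  shows "card (resolved_pairs (wheel_V n) (wheel_E n) w) = 4 * n - 13"
proof -
  let ?N = "{0, sc n w, pc n w}"
  note sp = sc_pc[OF n4 w]
  have eq: "{(u,v). u \<in> wheel_V n \<and> v \<in> wheel_V n \<and> gdist (wheel_V n) (wheel_E n) w u < gdist (wheel_V n) (wheel_E n) w v}
      = {w} \<times> ({0..<n} - {w}) \<union> ?N \<times> ({0..<n} - insert w ?N)"
    using n4 w sp by (auto simp: mem_wV dist_cyc split: if_splits)
  have cN: "card ?N = 3" using sp by auto
  have c4: "card (insert w ?N) = 4" using sp w by auto
  have sub: "insert w ?N \<subseteq> {0..<n}" using sp w by auto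
  have cM: "card ({0..<n} - insert w ?N) = n - 4"
    using card_Diff_subset[OF finite_subset[OF sub] sub] c4 by simp
  have cW: "card ({0..<n} - {w}) = n - 1" using w by simp
  have disj: "({w} \<times> ({0..<n} - {w})) \<inter> (?N \<times> ({0..<n} - insert w ?N)) = {}" using sp w by auto
  have "card ({w} \<times> ({0..<n} - {w}) \<union> ?N \<times> ({0..<n} - insert w ?N)) = (n - 1) + 3 * (n - 4)"
    by (subst card_Un_disjoint) (use disj cN cM cW card_cartesian_product in auto)
  also have "\<dots> = 4 * n - 13" using n4 by simp
  finally show ?thesis unfolding RP_eq L_count eq .
qed


lemma share_sum1:
  assumes P: "P \<in> vpairs (wheel_V n)"
  shows "(\<Sum>w\<in>wheel_V n. rshare (wheel_V n) (wheel_E n) w P) = 1"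
proof -
  let ?R = "resolving_verts (wheel_V n) (wheel_E n) P"
  obtain u v where uv: "P = {u,v}" "u < n" "v < n" "u \<noteq> v" using P by (auto simp: vpairs_def mem_wV)
  have fin: "finite ?R" by (rule finite_subset[of _ "wheel_V n"]) (auto simp: resolving_verts_def wheel_V_def)
  have "u \<in> ?R" using uv gd[of u n u] gd[of u n v]
    by (auto simp: resolving_verts_def resolves_pair mem_wV)
  then have c: "card ?R \<noteq> 0" using fin by auto
  have "(\<Sum>w\<in>wheel_V n. rshare (wheel_V n) (wheel_E n) w P)
      = (\<Sum>w\<in>wheel_V n. if resolves (wheel_V n) (wheel_E n) w P then 1 / real (card ?R) else 0)"
    unfolding rshare_def by simp
  also have "\<dots> = (\<Sum>w\<in>?R. 1 / real (card ?R))"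
    by (subst sum.inter_filter[symmetric]) (auto simp: wheel_V_def resolving_verts_def)
  also have "\<dots> = 1" using c by simp
  finally show ?thesis .
qed

lemma card_R_hubpair:
  assumes i: "1 \<le> i" "i < n"
  shows "card (resolving_verts (wheel_V n) (wheel_E n) {0, i}) = n - 2"
proof -
  note sp = sc_pc[OF n4 i]
  have eq: "resolving_verts (wheel_V n) (wheel_E n) {0, i} = {0..<n} - {sc n i, pc n i}"
    using sp i by (auto simp: resolving_verts_def resolves_pair mem_wV dist_hub' dist_cyc' split: if_splits)
  have sub: "{sc n i, pc n i} \<subseteq> {0..<n}" using sp by auto
  have "card {sc n i, pc n i} = 2" using sp by auto
  then show ?thesis unfolding eq using card_Diff_subset[OF finite_subset[OF sub] sub] by simp
qed

lemma sum_hub: "(\<Sum>P\<in>vpairs (wheel_V n). rshare (wheel_V n) (wheel_E n) 0 P) = real (n - 1) / real (n - 2)"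
proof -
  have "(\<Sum>P\<in>vpairs (wheel_V n). rshare (wheel_V n) (wheel_E n) 0 P)
     = (\<Sum>P\<in>resolved_pairs (wheel_V n) (wheel_E n) 0. rshare (wheel_V n) (wheel_E n) 0 P)"
    by (rule sum_RP[symmetric]) (simp add: wheel_V_def)
  also have "\<dots> = (\<Sum>P\<in>resolved_pairs (wheel_V n) (wheel_E n) 0. 1 / real (n - 2))"
  proof (rule sum.cong[OF refl])
    fix P assume P: "P \<in> resolved_pairs (wheel_V n) (wheel_E n) 0"
    have Pv: "P \<in> vpairs (wheel_V n)" using P by (simp add: resolved_pairs_def)
    obtain u v where uv0: "P = {u,v}"
      and d: "gdist (wheel_V n) (wheel_E n) 0 u \<noteq> gdist (wheel_V n) (wheel_E n) 0 v"
      using P unfolding RP_eq by blast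
    have "P \<subseteq> wheel_V n" using Pv by (auto simp: vpairs_def)
    then have uv: "P = {u,v}" "u < n" "v < n" "u \<noteq> v" using uv0 d by (auto simp: mem_wV)
    have res: "resolves (wheel_V n) (wheel_E n) 0 P" using P by (simp add: resolved_pairs_def)
    obtain i where i: "1 \<le> i" "i < n" "P = {0, i}"
    proof (cases "u = 0")
      case True then show ?thesis using that[of v] uv by auto
    next
      case False then have "v = 0" using d uv by (auto simp: dist_hub)
      then show ?thesis using that[of u] uv False by (auto simp: insert_commute)
    qed
    show "rshare (wheel_V n) (wheel_E n) 0 P = 1 / real (n - 2)"
      unfolding rshare_def using res card_R_hubpair[OF i(1,2)] i(3) by simp
  qed
  also have "\<dots> = real (n - 1) / real (n - 2)" using card_RP_hub by simp
  finally show ?thesis .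
qed

lemma card_vpairs: "real (card (vpairs (wheel_V n))) = real n * (real n - 1) / 2"
proof -
  have "vpairs (wheel_V n) = {B. B \<subseteq> {0..<n} \<and> card B = 2}"
    unfolding vpairs_def wheel_V_def card_2_iff by auto blast
  then have "card (vpairs (wheel_V n)) = n choose 2" using n_subsets[of "{0..<n::nat}" 2] by simp
  then show ?thesis using n4 by (auto simp add: choose_two field_char_0_class.of_nat_div mod_eq_0_iff_dvd of_nat_diff)
qed

end


lemma alg: fixes x :: real assumes "x - 2 \<noteq> 0" "4*x-13 \<noteq> 0"
  shows "1/(x-2) + (1/(4*x-13))*(x*(x-1)/2 - (x-1)/(x-2)) = (x-3)*(x^2+8)/(2*(x-2)*(4*x-13))"
proof -
  have "1/(x-2) + (1/(4*x-13))*(x*(x-1)/2 - (x-1)/(x-2)) = (2*(4*x-13) + x*(x-1)*(x-2) - 2*(x-1)) / (2*(x-2)*(4*x-13))"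
    using assms by (simp add: divide_simps) (simp add: algebra_simps)
  also have "2*(4*x-13) + x*(x-1)*(x-2) - 2*(x-1) = (x-3)*(x^2+8)" by (simp add: algebra_simps power2_eq_square)
  finally show ?thesis .
qed

theorem theorem3p11:
  fixes n :: nat
  assumes "n \<ge> 6"
  shows "resolving_index (wheel_V n) (wheel_E n) =
    (real n - 3) * ((real n)^2 + 8) / (2 * (real n - 2) * (4 * real n - 13))"
proof -
  have n4: "4 \<le> n" using assms by simp
  let ?V = "wheel_V n" and ?E = "wheel_E n"
  have finV: "finite ?V" by (simp add: wheel_V_def)
  have VI: "?V = insert 0 {1..<n}" using n4 by (auto simp: wheel_V_def)
  have split: "sum g ?V = g 0 + sum g {1..<n}" for g :: "nat \<Rightarrow> real"
    unfolding VI by simp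
  have r1: "real (n - 1) = real n - 1" and r2: "real (n - 2) = real n - 2"
    and r3: "real (4 * n - 13) = 4 * real n - 13" using n4 by (simp_all add: of_nat_diff)
  have avg0: "avg_rshare ?V ?E 0 = 1 / (real n - 2)"
    unfolding avg_rshare_def sum_RP[OF finV] card_RP_hub[OF n4] sum_hub[OF n4] r1 r2
    using n4 by (simp add: field_simps)
  have avgc: "avg_rshare ?V ?E w = (1 / (4 * real n - 13)) * (\<Sum>P\<in>vpairs ?V. rshare ?V ?E w P)"
    if "w \<in> {1..<n}" for w
    unfolding avg_rshare_def sum_RP[OF finV] using card_RP_cyc[OF n4, of w] that r3 by simp
  have tot: "(\<Sum>w\<in>?V. \<Sum>P\<in>vpairs ?V. rshare ?V ?E w P) = real (card (vpairs ?V))"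
  proof -
    have "(\<Sum>w\<in>?V. \<Sum>P\<in>vpairs ?V. rshare ?V ?E w P) = (\<Sum>P\<in>vpairs ?V. \<Sum>w\<in>?V. rshare ?V ?E w P)"
      by (rule sum.swap)
    also have "\<dots> = (\<Sum>P\<in>vpairs ?V. 1)" using share_sum1[OF n4] by simp
    finally show ?thesis by simp
  qed
  have totc: "(\<Sum>w\<in>{1..<n}. \<Sum>P\<in>vpairs ?V. rshare ?V ?E w P) = real n * (real n - 1) / 2 - (real n - 1) / (real n - 2)"
    using tot split[of "\<lambda>w. \<Sum>P\<in>vpairs ?V. rshare ?V ?E w P"] sum_hub[OF n4, unfolded r1 r2] card_vpairs[OF n4] by linarith
  have "resolving_index ?V ?E = avg_rshare ?V ?E 0 + (\<Sum>w\<in>{1..<n}. avg_rshare ?V ?E w)"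
    unfolding resolving_index_def by (rule split)
  also have "(\<Sum>w\<in>{1..<n}. avg_rshare ?V ?E w) = (1 / (4 * real n - 13)) * (\<Sum>w\<in>{1..<n}. \<Sum>P\<in>vpairs ?V. rshare ?V ?E w P)"
    by (simp add: avgc sum_distrib_left)
  finally have "resolving_index ?V ?E = 1 / (real n - 2) + (1 / (4 * real n - 13)) * (real n * (real n - 1) / 2 - (real n - 1) / (real n - 2))"
    using avg0 totc by simp
  also have "\<dots> = (real n - 3) * ((real n)^2 + 8) / (2 * (real n - 2) * (4 * real n - 13))"
  proof -
    have a: "real n - 2 \<noteq> 0" "4 * real n - 13 \<noteq> 0" using n4 by auto
    show ?thesis using alg[OF a] .
  qed
  finally show ?thesis .
qed

end
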